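(* (Soundness.) If $t\in\mathtt T_J$ is typable in $\cap J$, i.e. $\Gamma\vdash t:\sigma$ is derivable for some environment $\Gamma$ and type $\sigma$, then $t\in SN_{d\beta}$.
   Context: Terms $\mathtt T_J$: $t,u,r ::= x \mid \lambda x.t \mid t(u,y.r)$ ($y$ bound in $r$), up to $\alpha$-equivalence; $\{u/x\}t$ capture-avoiding substitution. List contexts $\mathtt D ::= \Diamond \mid t(u,y.\mathtt D)$. Distant beta: $\mathtt D\langle\lambda x.t\rangle(u,y.r) \mapsto_{d\beta} \{\{u/x\}\mathtt D\langle t\rangle/y\}r$ (variables bound by $\mathtt D$ not free in $u$, $x$ not in $\mathtt D$), $\to_{d\beta}$ its closure under all contexts; $SN_{d\beta}$ the set of terms with no infinite $\to_{d\beta}$-sequence. System $\cap J$: types $\sigma,\tau ::= \alpha \mid \mathcal M\to\sigma$, $\mathcal M=[\sigma_i]_{i\in I}$ a finite possibly empty multiset; $\sqcup$ multiset union; environments map variables to multisets, $\wedge$ pointwise union, $\Gamma;x:\mathcal M$ extension with $x\notin\mathrm{dom}\,\Gamma$. $\mathrm{ch}(\mathcal M)=\mathcal M$ if $\mathcal M\ne[\,]$, $\mathrm{ch}([\,])=[\tau]$ for an arbitrary $\tau$. Rules: (var) $x:[\sigma]\vdash x:\sigma$; (abs) from $\Gamma;x:\mathcal M\vdash t:\sigma$ infer $\Gamma\vdash\lambda x.t:\mathcal M\to\sigma$; (many) from $(\Gamma_i\vdash t:\sigma_i)_{i\in I}$, $I\ne\emptyset$, infer $\wedge_i\Gamma_i\vdash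 t:[\sigma_i]_{i\in I}$; (app) from $\Gamma\vdash t:\mathrm{ch}([\mathcal M_i\to\tau_i]_{i\in I})$, $\Delta\vdash u:\mathrm{ch}(\sqcup_i\mathcal M_i)$, $\Lambda;y:[\tau_i]_{i\in I}\vdash r:\sigma$ infer $\Gamma\wedge\Delta\wedge\Lambda\vdash t(u,y.r):\sigma$. *)

theory Defs
  imports Main "HOL-Library.Multiset"
begin

(* Var i : variable;  Lam t : \<lambda>x.t ;  App t u r : t(u, y.r) where y is bound (index 0) in r *)
datatype trm = Var nat | Lam trm | App trm trm trm

fun lift :: "nat \<Rightarrow> trm \<Rightarrow> trm" where
  "lift k (Var i) = (if i < k then Var i else Var (Suc i))"
| "lift k (Lam t) = Lam (lift (Suc k) t)"
| "lift k (App t u r) = App (lift k t) (lift k u) (lift (Suc k) r)"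

fun subst :: "trm \<Rightarrow> nat \<Rightarrow> trm \<Rightarrow> trm" where
  "subst (Var i) k s = (if k < i then Var (i - 1) else if i = k then s else Var i)"
| "subst (Lam t) k s = Lam (subst t (Suc k) (lift 0 s))"
| "subst (App t u r) k s = App (subst t k s) (subst u k s) (subst r (Suc k) (lift 0 s))"

datatype lctx = Hole | CApp trm trm lctx

fun plug :: "lctx \<Rightarrow> trm \<Rightarrow> trm" where
  "plug Hole s = s"
| "plug (CApp t u D) s = App t u (plug D s)"

fun depth :: "lctx \<Rightarrow> nat" where
  "depth Hole = 0"
| "depth (CApp t u D) = Suc (depth D)"

(* D<\<lambda>x.t>(u, y.r) \<mapsto> {{u/x} D<t> / y} r ; lifting u past the binders of D
   realises the side condition that variables bound by D are not free in u *)
definition dbeta_root :: "trm \<Rightarrow> trm \<Rightarrow> bool" where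
  "dbeta_root a b \<longleftrightarrow> (\<exists>D t u r. a = App (plug D (Lam t)) u r \<and>
      b = subst r 0 (plug D (subst t 0 ((lift 0 ^^ depth D) u))))"

inductive dbeta :: "trm \<Rightarrow> trm \<Rightarrow> bool" where
  root: "dbeta_root a b \<Longrightarrow> dbeta a b"
| lam: "dbeta t t' \<Longrightarrow> dbeta (Lam t) (Lam t')"
| app1: "dbeta t t' \<Longrightarrow> dbeta (App t u r) (App t' u r)"
| app2: "dbeta u u' \<Longrightarrow> dbeta (App t u r) (App t u' r)"
| app3: "dbeta r r' \<Longrightarrow> dbeta (App t u r) (App t u r')"

definition SN_dbeta :: "trm \<Rightarrow> bool" where
  "SN_dbeta t \<longleftrightarrow> \<not> (\<exists>f. f 0 = t \<and> (\<forall>i. dbeta (f i) (f (Suc i))))"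

datatype ty = TVar nat | Arr "ty multiset" ty

type_synonym env = "nat \<Rightarrow> ty multiset"

definition env_and :: "env \<Rightarrow> env \<Rightarrow> env" where
  "env_and G D = (\<lambda>x. G x + D x)"

definition env_ext :: "env \<Rightarrow> ty multiset \<Rightarrow> env" where
  "env_ext G M = (\<lambda>i. case i of 0 \<Rightarrow> M | Suc j \<Rightarrow> G j)"

definition env_single :: "nat \<Rightarrow> ty \<Rightarrow> env" where
  "env_single x s = (\<lambda>y. if y = x then {#s#} else {#})"

definition env_empty :: env where
  "env_empty = (\<lambda>_. {#})"

(* is_ch M N  iff  N = ch(M), with an arbitrary choice of \<tau> when M is empty *)
definition is_ch :: "ty multiset \<Rightarrow> ty multiset \<Rightarrow> bool" where
  "is_ch M N \<longleftrightarrow> (M \<noteq> {#} \<and> N = M) \<or> (M = {#} \<and> (\<exists>\<tau>. N = {#\<tau>#}))"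

inductive typing :: "env \<Rightarrow> trm \<Rightarrow> ty \<Rightarrow> bool"
  and mtyping :: "env \<Rightarrow> trm \<Rightarrow> ty multiset \<Rightarrow> bool" where
  var: "typing (env_single x s) (Var x) s"
| abs: "typing (env_ext G M) t s \<Longrightarrow> typing G (Lam t) (Arr M s)"
| many: "L \<noteq> [] \<Longrightarrow> (\<forall>p \<in> set L. typing (fst p) t (snd p)) \<Longrightarrow>
         mtyping (foldr env_and (map fst L) env_empty) t (mset (map snd L))"
| app: "is_ch (mset (map (\<lambda>p. Arr (fst p) (snd p)) L)) A \<Longrightarrow> mtyping G t A \<Longrightarrow>
        is_ch (sum_list (map fst L)) B \<Longrightarrow> mtyping D u B \<Longrightarrow>
        typing (env_ext Lm (mset (map snd L))) r s \<Longrightarrow>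
        typing (env_and G (env_and D Lm)) (App t u r) s"

end

theory Submission
  imports Defs
begin

inductive wt :: "env \<Rightarrow> trm \<Rightarrow> ty \<Rightarrow> nat \<Rightarrow> bool"
  and wm :: "env \<Rightarrow> trm \<Rightarrow> ty multiset \<Rightarrow> nat \<Rightarrow> bool" where
  wvar: "s \<in># G x \<Longrightarrow> wt G (Var x) s (Suc 0)"
| wabs: "wt (env_ext G M) t s n \<Longrightarrow> wt G (Lam t) (Arr M s) (Suc n)"
| wapp: "is_ch (mset (map (\<lambda>p. Arr (fst p) (snd p)) L)) A \<Longrightarrow> wm G1 t A n1 \<Longrightarrow>
        is_ch (sum_list (map fst L)) B \<Longrightarrow> wm G2 u B n2 \<Longrightarrow>
        wt (env_ext G3 (mset (map snd L))) r s n3 \<Longrightarrow>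
        (\<forall>x. G1 x + G2 x + G3 x \<subseteq># G x) \<Longrightarrow>
        wt G (App t u r) s (Suc (n1 + n2 + n3))"
| wnil: "wm G t {#} 0"
| wcons: "wt G1 t s n \<Longrightarrow> wm G2 t A m \<Longrightarrow> (\<forall>x. G1 x + G2 x \<subseteq># G x) \<Longrightarrow>
        wm G t (add_mset s A) (n + m)"

lemma weaken:
  "wt G t s n \<Longrightarrow> (\<forall>x. G x \<subseteq># H x) \<Longrightarrow> wt H t s n"
  "wm G t A n \<Longrightarrow> (\<forall>x. G x \<subseteq># H x) \<Longrightarrow> wm H t A n"
proof (induction arbitrary: H and H rule: wt_wm.inducts)
  case (wvar s G x)
  then show ?case by (meson mset_subset_eqD wt_wm.wvar)
next
  case (wabs G M t s n)
  have "\<forall>x. env_ext G M x \<subseteq># env_ext H M x"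
    using wabs.prems by (auto simp: env_ext_def split: nat.split)
  then show ?case using wabs.IH wt_wm.wabs by blast
next
  case (wapp L A G1 t n1 B G2 u n2 G3 r s n3 G)
  have "\<forall>x. G1 x + G2 x + G3 x \<subseteq># H x" using wapp.hyps(6) wapp.prems
    by (meson subset_mset.order_trans)
  then show ?case using wt_wm.wapp[OF wapp.hyps(1,2,3,4,5)] by blast
next
  case (wnil G t)
  show ?case by (rule wt_wm.wnil)
next
  case (wcons G1 t s n G2 A m G)
  then show ?case by (meson subset_mset.order_trans wt_wm.wcons)
qed

lemma translate:
  "typing G t s \<Longrightarrow> \<exists>n. wt G t s n"
  "mtyping G t A \<Longrightarrow> \<exists>n. wm G t A n"
proof (induction rule: typing_mtyping.inducts)
  case (var x s)
  have "wt (env_single x s) (Var x) s (Suc 0)" by (rule wvar) (simp add: env_single_def)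
  then show ?case by blast
next
  case (abs G M t s)
  then show ?case using wabs by blast
next
  case (many L t)
  have "\<forall>p\<in>set L. \<exists>n. wt (fst p) t (snd p) n" using many by blast
  then have "\<exists>n. wm (foldr env_and (map fst L) env_empty) t (mset (map snd L)) n"
  proof (induction L)
    case Nil
    then show ?case using wnil by auto
  next
    case (Cons p L)
    then obtain n m where "wt (fst p) t (snd p) n" "wm (foldr env_and (map fst L) env_empty) t (mset (map snd L)) m"
      by auto
    then have "wm (env_and (fst p) (foldr env_and (map fst L) env_empty)) t (add_mset (snd p) (mset (map snd L))) (n+m)"
      by (intro wcons[of "fst p" t "snd p" n _ "mset (map snd L)" m]) (auto simp: env_and_def)
    then show ?case by auto
  qed
  then show ?case .
next
  case (app L A G t B D u Lm r s)
  then obtain n1 n2 n3 where "wm G t A n1" "wm D u B n2" "wt (env_ext Lm (mset (map snd L))) r s n3"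
    by blast
  then have "wt (env_and G (env_and D Lm)) (App t u r) s (Suc (n1 + n2 + n3))"
    using app(1,3) by (intro wapp[of L A G t n1 B D u n2 Lm r s n3]) (auto simp: env_and_def add.assoc)
  then show ?case by blast
qed

lemma wm_pick_aux:
  "wt G0 t0 s0 n0 \<Longrightarrow> True"
  "wm G t B n \<Longrightarrow> B = add_mset s A \<Longrightarrow> \<exists>G1 G2 n1 n2. wt G1 t s n1 \<and> wm G2 t A n2 \<and>
     (\<forall>x. G1 x + G2 x \<subseteq># G x) \<and> n = n1 + n2"
proof (induction arbitrary: and s A rule: wt_wm.inducts)
  case (wcons G1 t s' n G2 A' m G)
  show ?case
  proof (cases "s = s'")
    case True
    then have "A = A'" using wcons.prems by simp
    then show ?thesis using wcons.hyps True by blast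
  next
    case False
    then have "s \<in># A'" using wcons.prems by (metis insert_noteq_member)
    then obtain A0 where A0: "A' = add_mset s A0" by (metis multi_member_split)
    then have A: "A = add_mset s' A0" using wcons.prems False
      by (metis add_mset_commute add_mset_remove_trivial)
    from wcons.IH(2)[OF A0] obtain Ga Gb na nb where
      h: "wt Ga t s na" "wm Gb t A0 nb" "\<forall>x. Ga x + Gb x \<subseteq># G2 x" "m = na + nb" by blast
    have "wm (\<lambda>x. G1 x + Gb x) t (add_mset s' A0) (n + nb)"
      by (rule wt_wm.wcons[OF wcons.hyps(1) h(2)]) simp
    moreover have "\<forall>x. Ga x + (G1 x + Gb x) \<subseteq># G x"
    proof
      fix x
      have "Ga x + (G1 x + Gb x) = G1 x + (Ga x + Gb x)" by (simp add: ac_simps)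
      also have "\<dots> \<subseteq># G1 x + G2 x" using h(3) by (simp add: subset_mset.add_left_mono)
      also have "\<dots> \<subseteq># G x" using wcons.hyps(3) by blast
      finally show "Ga x + (G1 x + Gb x) \<subseteq># G x" .
    qed
    ultimately show ?thesis using h A by (intro exI[of _ Ga] exI[of _ "\<lambda>x. G1 x + Gb x"] exI[of _ na] exI[of _ "n+nb"]) auto
  qed
qed auto

lemma wm_pick:
  "wm G t (add_mset s A) n \<Longrightarrow> \<exists>G1 G2 n1 n2. wt G1 t s n1 \<and> wm G2 t A n2 \<and>
     (\<forall>x. G1 x + G2 x \<subseteq># G x) \<and> n = n1 + n2"
  using wm_pick_aux(2) by blast

lemma wm_split:
  "wm G t (A + B) n \<Longrightarrow> \<exists>G1 G2 n1 n2. wm G1 t A n1 \<and> wm G2 t B n2 \<and>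
     (\<forall>x. G1 x + G2 x \<subseteq># G x) \<and> n = n1 + n2"
proof (induction A arbitrary: G n)
  case empty
  then show ?case by (intro exI[of _ "\<lambda>_. {#}"] exI[of _ G] exI[of _ 0] exI[of _ n]) (auto intro: wnil)
next
  case (add a A)
  from wm_pick[of G t a "A + B" n] add.prems obtain Ga Gr na nr where
    h: "wt Ga t a na" "wm Gr t (A + B) nr" "\<forall>x. Ga x + Gr x \<subseteq># G x" "n = na + nr" by auto
  from add.IH[OF h(2)] obtain G1 G2 n1 n2 where
    h2: "wm G1 t A n1" "wm G2 t B n2" "\<forall>x. G1 x + G2 x \<subseteq># Gr x" "nr = n1 + n2" by blast
  have "wm (\<lambda>x. Ga x + G1 x) t (add_mset a A) (na + n1)"
    by (rule wt_wm.wcons[OF h(1) h2(1)]) simp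
  moreover have "\<forall>x. (Ga x + G1 x) + G2 x \<subseteq># G x"
  proof
    fix x
    have "(Ga x + G1 x) + G2 x = Ga x + (G1 x + G2 x)" by (simp add: ac_simps)
    also have "\<dots> \<subseteq># Ga x + Gr x" using h2(3) by (simp add: subset_mset.add_left_mono)
    also have "\<dots> \<subseteq># G x" using h(3) by blast
    finally show "(Ga x + G1 x) + G2 x \<subseteq># G x" .
  qed
  ultimately show ?case using h h2 h(4) by (intro exI[of _ "\<lambda>x. Ga x + G1 x"] exI[of _ G2] exI[of _ "na+n1"] exI[of _ n2]) auto
qed

lemma wm_sub:
  assumes "wm G t A n" "A' \<subseteq># A"
  shows "\<exists>G' n'. wm G' t A' n' \<and> n' \<le> n \<and> (\<forall>x. G' x \<subseteq># G x)"
proof -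
  have "A = A' + (A - A')" using assms(2) by simp
  then obtain G1 G2 n1 n2 where "wm G1 t A' n1" "\<forall>x. G1 x + G2 x \<subseteq># G x" "n = n1 + n2"
    using wm_split[of G t A' "A - A'" n] assms(1) by metis
  then show ?thesis
    by (metis le_add1 mset_subset_eq_add_left subset_mset.order_trans)
qed

definition shift :: "nat \<Rightarrow> env \<Rightarrow> env" where
  "shift k G i = (if i < k then G i else if i = k then {#} else G (i - 1))"

lemma shift_ext: "shift (Suc k) (env_ext G M) = env_ext (shift k G) M"
  by (rule ext) (auto simp: shift_def env_ext_def split: nat.split)

lemma shift0: "shift 0 G = env_ext G {#}"
  by (rule ext) (auto simp: shift_def env_ext_def split: nat.split)

lemma wt_lift:
  "wt G t s n \<Longrightarrow> wt (shift k G) (lift k t) s n"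
  "wm G t A n \<Longrightarrow> wm (shift k G) (lift k t) A n"
proof (induction arbitrary: k and k rule: wt_wm.inducts)
  case (wvar s G x)
  then show ?case by (auto intro!: wt_wm.wvar simp: shift_def)
next
  case (wabs G M t s n)
  then show ?case using wt_wm.wabs by (simp add: shift_ext[symmetric])
next
  case (wapp L A G1 t n1 B G2 u n2 G3 r s n3 G)
  have r: "wt (env_ext (shift k G3) (mset (map snd L))) (lift (Suc k) r) s n3"
    using wapp.IH(3)[of "Suc k"] by (simp add: shift_ext)
  have "\<forall>x. shift k G1 x + shift k G2 x + shift k G3 x \<subseteq># shift k G x"
    using wapp.hyps(6) by (simp add: shift_def)
  then show ?case using wt_wm.wapp[OF wapp.hyps(1) wapp.IH(1) wapp.hyps(3) wapp.IH(2) r] by simp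
next
  case (wnil G t)
  then show ?case by (simp add: wt_wm.wnil)
next
  case (wcons G1 t s n G2 A m G)
  have "\<forall>x. shift k G1 x + shift k G2 x \<subseteq># shift k G x"
    using wcons.hyps(3) by (simp add: shift_def)
  then show ?case using wt_wm.wcons[OF wcons.IH(1) wcons.IH(2)] by simp
qed

lemma wm_lift0: "wm G u A n \<Longrightarrow> wm (env_ext G {#}) (lift 0 u) A n"
  using wt_lift(2)[of G u A n 0] by (simp add: shift0)


definition dropv :: "nat \<Rightarrow> env \<Rightarrow> env" where
  "dropv k G i = G (if i < k then i else Suc i)"

lemma dropv_ext: "(\<lambda>i. dropv (Suc k) (env_ext G M) i + env_ext Gu {#} i) = env_ext (\<lambda>i. dropv k G i + Gu i) M"
  by (rule ext) (auto simp: dropv_def env_ext_def split: nat.split)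

lemma wm_split3:
  assumes "wm Gu u M m" "A1 + A2 + A3 \<subseteq># M"
  shows "\<exists>Ga Gb Gc ma mb mc. wm Ga u A1 ma \<and> wm Gb u A2 mb \<and> wm Gc u A3 mc \<and>
     (\<forall>x. Ga x + Gb x + Gc x \<subseteq># Gu x) \<and> ma + mb + mc \<le> m"
proof -
  obtain G' m' where h: "wm G' u (A1 + A2 + A3) m'" "m' \<le> m" "\<forall>x. G' x \<subseteq># Gu x"
    using wm_sub[OF assms] by blast
  obtain G12 Gc m12 mc where h2: "wm G12 u (A1 + A2) m12" "wm Gc u A3 mc"
    "\<forall>x. G12 x + Gc x \<subseteq># G' x" "m' = m12 + mc" using wm_split[OF h(1)] by blast
  obtain Ga Gb ma mb where h3: "wm Ga u A1 ma" "wm Gb u A2 mb"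
    "\<forall>x. Ga x + Gb x \<subseteq># G12 x" "m12 = ma + mb" using wm_split[OF h2(1)] by blast
  have "\<forall>x. Ga x + Gb x + Gc x \<subseteq># Gu x"
  proof
    fix x
    have "Ga x + Gb x + Gc x \<subseteq># G12 x + Gc x" using h3(3) by (simp add: subset_mset.add_right_mono)
    also have "\<dots> \<subseteq># G' x" using h2(3) by blast
    also have "\<dots> \<subseteq># Gu x" using h(3) by blast
    finally show "Ga x + Gb x + Gc x \<subseteq># Gu x" .
  qed
  then show ?thesis using h h2 h3 by (intro exI[of _ Ga] exI[of _ Gb] exI[of _ Gc] exI[of _ ma] exI[of _ mb] exI[of _ mc]) auto
qed

lemma wm_split2:
  assumes "wm Gu u M m" "A1 + A2 \<subseteq># M"
  shows "\<exists>Ga Gb ma mb. wm Ga u A1 ma \<and> wm Gb u A2 mb \<and>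
     (\<forall>x. Ga x + Gb x \<subseteq># Gu x) \<and> ma + mb \<le> m"
proof -
  obtain G' m' where h: "wm G' u (A1 + A2) m'" "m' \<le> m" "\<forall>x. G' x \<subseteq># Gu x"
    using wm_sub[OF assms] by blast
  obtain Ga Gb ma mb where h3: "wm Ga u A1 ma" "wm Gb u A2 mb"
    "\<forall>x. Ga x + Gb x \<subseteq># G' x" "m' = ma + mb" using wm_split[OF h(1)] by blast
  then show ?thesis using h by (meson subset_mset.order_trans)
qed

lemma wt_subst:
  "wt G t s n \<Longrightarrow> wm Gu u (G k) m \<Longrightarrow> \<exists>n'. wt (\<lambda>i. dropv k G i + Gu i) (subst t k u) s n' \<and> n' \<le> n + m"
  "wm G t A n \<Longrightarrow> wm Gu u (G k) m \<Longrightarrow> \<exists>n'. wm (\<lambda>i. dropv k G i + Gu i) (subst t k u) A n' \<and> n' \<le> n + m"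
proof (induction arbitrary: k u Gu m and k u Gu m rule: wt_wm.inducts)
  case (wvar s G x)
  show ?case
  proof (cases "x = k")
    case True
    then obtain R where "G k = add_mset s R" using wvar.hyps by (metis multi_member_split)
    then obtain G1 G2 n1 n2 where h: "wt G1 u s n1" "\<forall>x. G1 x + G2 x \<subseteq># Gu x" "m = n1 + n2"
      using wm_pick[of Gu u s R m] wvar.prems by auto
    have "\<forall>i. G1 i \<subseteq># dropv k G i + Gu i"
      using h(2) by (meson mset_subset_eq_add_left mset_subset_eq_add_right subset_mset.order_trans)
    then have "wt (\<lambda>i. dropv k G i + Gu i) u s n1" by (intro weaken(1)[OF h(1)]) simp
    then show ?thesis using True h(3) by auto
  next
    case False
    have "s \<in># dropv k G (if k < x then x - 1 else x) + Gu (if k < x then x - 1 else x)"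
      using wvar.hyps False by (auto simp: dropv_def)
    then have "wt (\<lambda>i. dropv k G i + Gu i) (Var (if k < x then x - 1 else x)) s (Suc 0)"
      by (rule wt_wm.wvar)
    then show ?thesis using False by (auto intro: exI[of _ "Suc 0"])
  qed
next
  case (wabs G M t s n)
  have "wm (env_ext Gu {#}) (lift 0 u) (env_ext G M (Suc k)) m"
    using wm_lift0[OF wabs.prems] by (simp add: env_ext_def)
  from wabs.IH[OF this] obtain n' where
    "wt (env_ext (\<lambda>i. dropv k G i + Gu i) M) (subst t (Suc k) (lift 0 u)) s n'" "n' \<le> n + m"
    by (auto simp: dropv_ext)
  then show ?case using wt_wm.wabs by fastforce
next
  case (wapp L A G1 t n1 B G2 u1 n2 G3 r s n3 G)
  have "G1 k + G2 k + G3 k \<subseteq># G k" using wapp.hyps(6) by blast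
  then obtain Ga Gb Gc ma mb mc where sp: "wm Ga u (G1 k) ma" "wm Gb u (G2 k) mb" "wm Gc u (G3 k) mc"
     "\<forall>x. Ga x + Gb x + Gc x \<subseteq># Gu x" "ma + mb + mc \<le> m"
    using wm_split3[OF wapp.prems] by blast
  obtain n1' where t: "wm (\<lambda>i. dropv k G1 i + Ga i) (subst t k u) A n1'" "n1' \<le> n1 + ma"
    using wapp.IH(1)[OF sp(1)] by blast
  obtain n2' where u: "wm (\<lambda>i. dropv k G2 i + Gb i) (subst u1 k u) B n2'" "n2' \<le> n2 + mb"
    using wapp.IH(2)[OF sp(2)] by blast
  have "wm (env_ext Gc {#}) (lift 0 u) (env_ext G3 (mset (map snd L)) (Suc k)) mc"
    using wm_lift0[OF sp(3)] by (simp add: env_ext_def)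
  from wapp.IH(3)[OF this] obtain n3' where
    r: "wt (env_ext (\<lambda>i. dropv k G3 i + Gc i) (mset (map snd L))) (subst r (Suc k) (lift 0 u)) s n3'" "n3' \<le> n3 + mc"
    by (auto simp: dropv_ext)
  have "\<forall>x. (dropv k G1 x + Ga x) + (dropv k G2 x + Gb x) + (dropv k G3 x + Gc x) \<subseteq># dropv k G x + Gu x"
  proof
    fix x
    have "(dropv k G1 x + Ga x) + (dropv k G2 x + Gb x) + (dropv k G3 x + Gc x) =
      (dropv k G1 x + dropv k G2 x + dropv k G3 x) + (Ga x + Gb x + Gc x)" by (simp add: ac_simps)
    also have "\<dots> \<subseteq># dropv k G x + Gu x"
      using wapp.hyps(6) sp(4) by (intro subset_mset.add_mono) (auto simp: dropv_def)
    finally show "(dropv k G1 x + Ga x) + (dropv k G2 x + Gb x) + (dropv k G3 x + Gc x) \<subseteq># dropv k G x + Gu x" .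
  qed
  from wt_wm.wapp[OF wapp.hyps(1) t(1) wapp.hyps(3) u(1) r(1) this]
  show ?case using t(2) u(2) r(2) sp(5) by (intro exI[of _ "Suc (n1' + n2' + n3')"]) auto
next
  case (wnil G t)
  then show ?case using wt_wm.wnil by auto
next
  case (wcons G1 t s n G2 A m0 G)
  have "G1 k + G2 k \<subseteq># G k" using wcons.hyps(3) by blast
  then obtain Ga Gb ma mb where sp: "wm Ga u (G1 k) ma" "wm Gb u (G2 k) mb"
     "\<forall>x. Ga x + Gb x \<subseteq># Gu x" "ma + mb \<le> m"
    using wm_split2[OF wcons.prems] by blast
  obtain n1' where t: "wt (\<lambda>i. dropv k G1 i + Ga i) (subst t k u) s n1'" "n1' \<le> n + ma"
    using wcons.IH(1)[OF sp(1)] by blast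
  obtain n2' where u: "wm (\<lambda>i. dropv k G2 i + Gb i) (subst t k u) A n2'" "n2' \<le> m0 + mb"
    using wcons.IH(2)[OF sp(2)] by blast
  have "\<forall>x. (dropv k G1 x + Ga x) + (dropv k G2 x + Gb x) \<subseteq># dropv k G x + Gu x"
  proof
    fix x
    have "(dropv k G1 x + Ga x) + (dropv k G2 x + Gb x) =
      (dropv k G1 x + dropv k G2 x) + (Ga x + Gb x)" by (simp add: ac_simps)
    also have "\<dots> \<subseteq># dropv k G x + Gu x"
      using wcons.hyps(3) sp(3) by (intro subset_mset.add_mono) (auto simp: dropv_def)
    finally show "(dropv k G1 x + Ga x) + (dropv k G2 x + Gb x) \<subseteq># dropv k G x + Gu x" .
  qed
  from wt_wm.wcons[OF t(1) u(1) this]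
  show ?case using t(2) u(2) sp(4) by (intro exI[of _ "n1' + n2'"]) auto
qed


inductive_cases wtLamE: "wt G (Lam t) s n"
inductive_cases wtAppE: "wt G (App t u r) s n"
inductive_cases wmE: "wm G t A n"

lemma funpow_lift: "(lift 0 ^^ Suc d) u = (lift 0 ^^ d) (lift 0 u)"
  by (simp add: funpow_Suc_right del: funpow.simps)

lemma plug_red:
  "wt G (plug D (Lam t)) (Arr M \<tau>) n \<Longrightarrow> wm Gu u M m \<Longrightarrow>
   \<exists>n'. wt (\<lambda>i. G i + Gu i) (plug D (subst t 0 ((lift 0 ^^ depth D) u))) \<tau> n' \<and> n' < n + m"
proof (induction D arbitrary: G n Gu u m)
  case Hole
  from Hole.prems(1) obtain n0 where h: "wt (env_ext G M) t \<tau> n0" "n = Suc n0"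
    by (auto elim: wtLamE)
  have "wm Gu u (env_ext G M 0) m" using Hole.prems(2) by (simp add: env_ext_def)
  from wt_subst(1)[OF h(1) this] obtain n' where
    "wt (\<lambda>i. dropv 0 (env_ext G M) i + Gu i) (subst t 0 u) \<tau> n'" "n' \<le> n0 + m" by blast
  moreover have "(\<lambda>i. dropv 0 (env_ext G M) i + Gu i) = (\<lambda>i. G i + Gu i)"
    by (auto simp: dropv_def env_ext_def)
  ultimately show ?case using h(2) by (intro exI[of _ n']) auto
next
  case (CApp t1 u1 D)
  from CApp.prems(1) obtain L A G1 n1 B G2 n2 G3 n3 where h:
    "is_ch (mset (map (\<lambda>p. Arr (fst p) (snd p)) L)) A" "wm G1 t1 A n1"
    "is_ch (sum_list (map fst L)) B" "wm G2 u1 B n2"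
    "wt (env_ext G3 (mset (map snd L))) (plug D (Lam t)) (Arr M \<tau>) n3"
    "\<forall>x. G1 x + G2 x + G3 x \<subseteq># G x" "n = Suc (n1 + n2 + n3)"
    by (auto elim: wtAppE)
  from CApp.IH[OF h(5) wm_lift0[OF CApp.prems(2)]] obtain n3' where
    r: "wt (\<lambda>i. env_ext G3 (mset (map snd L)) i + env_ext Gu {#} i) (plug D (subst t 0 ((lift 0 ^^ depth D) (lift 0 u)))) \<tau> n3'"
    "n3' < n3 + m" by blast
  have e: "(\<lambda>i. env_ext G3 (mset (map snd L)) i + env_ext Gu {#} i) = env_ext (\<lambda>i. G3 i + Gu i) (mset (map snd L))"
    by (rule ext) (auto simp: env_ext_def split: nat.split)
  have "\<forall>x. G1 x + G2 x + (G3 x + Gu x) \<subseteq># G x + Gu x"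
    using h(6) by (metis add.assoc subset_mset.add_right_mono)
  from wt_wm.wapp[OF h(1-4) r(1)[unfolded e] this]
  show ?case using r(2) h(7) by (intro exI[of _ "Suc (n1 + n2 + n3')"]) (auto simp: funpow_swap1)
qed


lemma collect:
  "wm G1 (plug D (Lam t)) (mset (map (\<lambda>p. Arr (fst p) (snd p)) L)) n1 \<Longrightarrow>
   wm G2 u (sum_list (map fst L)) n2 \<Longrightarrow>
   \<exists>GX nX. wm GX (plug D (subst t 0 ((lift 0 ^^ depth D) u))) (mset (map snd L)) nX \<and>
     (\<forall>x. GX x \<subseteq># G1 x + G2 x) \<and> nX \<le> n1 + n2"
proof (induction L arbitrary: G1 G2 n1 n2)
  case Nil
  then show ?case by (intro exI[of _ "\<lambda>_. {#}"] exI[of _ 0]) (auto intro: wnil)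
next
  case (Cons p L)
  have p1: "wm G1 (plug D (Lam t)) (add_mset (Arr (fst p) (snd p)) (mset (map (\<lambda>p. Arr (fst p) (snd p)) L))) n1"
    using Cons.prems(1) by simp
  from wm_pick[OF p1] obtain Ga Gb na nb where
    a: "wt Ga (plug D (Lam t)) (Arr (fst p) (snd p)) na"
       "wm Gb (plug D (Lam t)) (mset (map (\<lambda>p. Arr (fst p) (snd p)) L)) nb"
       "\<forall>x. Ga x + Gb x \<subseteq># G1 x" "n1 = na + nb" by blast
  have p2: "wm G2 u (fst p + sum_list (map fst L)) n2" using Cons.prems(2) by simp
  from wm_split[OF p2] obtain Gc Gd nc nd where
    b: "wm Gc u (fst p) nc" "wm Gd u (sum_list (map fst L)) nd"
       "\<forall>x. Gc x + Gd x \<subseteq># G2 x" "n2 = nc + nd" by blast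
  from plug_red[OF a(1) b(1)] obtain nx where
    x: "wt (\<lambda>i. Ga i + Gc i) (plug D (subst t 0 ((lift 0 ^^ depth D) u))) (snd p) nx" "nx < na + nc"
    by blast
  from Cons.IH[OF a(2) b(2)] obtain Ge ne where
    e: "wm Ge (plug D (subst t 0 ((lift 0 ^^ depth D) u))) (mset (map snd L)) ne"
       "\<forall>x. Ge x \<subseteq># Gb x + Gd x" "ne \<le> nb + nd" by blast
  have w: "wm (\<lambda>x. (Ga x + Gc x) + Ge x) (plug D (subst t 0 ((lift 0 ^^ depth D) u))) (add_mset (snd p) (mset (map snd L))) (nx + ne)"
    by (rule wt_wm.wcons[OF x(1) e(1)]) simp
  have "\<forall>x. (Ga x + Gc x) + Ge x \<subseteq># G1 x + G2 x"
  proof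
    fix x
    have "(Ga x + Gc x) + Ge x \<subseteq># (Ga x + Gc x) + (Gb x + Gd x)"
      using e(2) by (simp add: subset_mset.add_left_mono)
    also have "\<dots> = (Ga x + Gb x) + (Gc x + Gd x)" by (simp add: ac_simps)
    also have "\<dots> \<subseteq># G1 x + G2 x" using a(3) b(3) by (intro subset_mset.add_mono) auto
    finally show "(Ga x + Gc x) + Ge x \<subseteq># G1 x + G2 x" .
  qed
  then show ?case using w x(2) e(3) a(4) b(4)
    by (intro exI[of _ "\<lambda>x. (Ga x + Gc x) + Ge x"] exI[of _ "nx + ne"]) auto
qed

lemma root_sr:
  assumes "dbeta_root a b" "wt G a s n"
  shows "\<exists>n'. wt G b s n' \<and> n' < n"
proof -
  from assms(1) obtain D t u r where ab: "a = App (plug D (Lam t)) u r"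
    "b = subst r 0 (plug D (subst t 0 ((lift 0 ^^ depth D) u)))"
    unfolding dbeta_root_def by blast
  let ?X = "plug D (subst t 0 ((lift 0 ^^ depth D) u))"
  from assms(2) ab(1) obtain L A G1 n1 B G2 n2 G3 n3 where h:
    "is_ch (mset (map (\<lambda>p. Arr (fst p) (snd p)) L)) A" "wm G1 (plug D (Lam t)) A n1"
    "is_ch (sum_list (map fst L)) B" "wm G2 u B n2"
    "wt (env_ext G3 (mset (map snd L))) r s n3"
    "\<forall>x. G1 x + G2 x + G3 x \<subseteq># G x" "n = Suc (n1 + n2 + n3)"
    by (auto elim: wtAppE)
  have "\<exists>GX nX. wm GX ?X (mset (map snd L)) nX \<and> (\<forall>x. GX x \<subseteq># G1 x + G2 x) \<and> nX \<le> n1 + n2"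
  proof (cases "L = []")
    case True
    then show ?thesis by (intro exI[of _ "\<lambda>_. {#}"] exI[of _ 0]) (auto intro: wnil)
  next
    case False
    then have A: "A = mset (map (\<lambda>p. Arr (fst p) (snd p)) L)" using h(1) by (auto simp: is_ch_def)
    obtain n2' where u: "wm G2 u (sum_list (map fst L)) n2'" "n2' \<le> n2"
    proof (cases "sum_list (map fst L) = {#}")
      case True
      then show ?thesis using that[of 0] by (auto intro: wnil)
    next
      case False
      then show ?thesis using that[of n2] h(3,4) by (auto simp: is_ch_def)
    qed
    from collect[OF h(2)[unfolded A] u(1)] u(2) show ?thesis by fastforce
  qed
  then obtain GX nX where X: "wm GX ?X (mset (map snd L)) nX" "\<forall>x. GX x \<subseteq># G1 x + G2 x" "nX \<le> n1 + n2"
    by blast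
  have "wm GX ?X (env_ext G3 (mset (map snd L)) 0) nX" using X(1) by (simp add: env_ext_def)
  from wt_subst(1)[OF h(5) this] obtain n' where
    r: "wt (\<lambda>i. dropv 0 (env_ext G3 (mset (map snd L))) i + GX i) (subst r 0 ?X) s n'" "n' \<le> n3 + nX"
    by blast
  have "\<forall>i. dropv 0 (env_ext G3 (mset (map snd L))) i + GX i \<subseteq># G i"
  proof
    fix i
    have "dropv 0 (env_ext G3 (mset (map snd L))) i + GX i = G3 i + GX i"
      by (simp add: dropv_def env_ext_def)
    also have "\<dots> \<subseteq># G3 i + (G1 i + G2 i)" using X(2) by (simp add: subset_mset.add_left_mono)
    also have "\<dots> = G1 i + G2 i + G3 i" by (simp add: ac_simps)
    also have "\<dots> \<subseteq># G i" using h(6) by blast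
    finally show "dropv 0 (env_ext G3 (mset (map snd L))) i + GX i \<subseteq># G i" .
  qed
  from weaken(1)[OF r(1) this] show ?thesis using ab(2) r(2) X(3) h(7) by (intro exI[of _ n']) auto
qed


lemma is_ch_ne: "is_ch M N \<Longrightarrow> N \<noteq> {#}"
  by (auto simp: is_ch_def)

lemma wm_sr:
  assumes "\<And>G s n. wt G a s n \<Longrightarrow> \<exists>n'. wt G b s n' \<and> n' < n"
  shows "wm G a A n \<Longrightarrow> \<exists>n'. wm G b A n' \<and> n' \<le> n \<and> (A \<noteq> {#} \<longrightarrow> n' < n)"
proof (induction A arbitrary: G n)
  case empty
  then show ?case by (intro exI[of _ 0]) (auto intro: wnil)
next
  case (add x A)
  from wm_pick[OF add.prems] obtain G1 G2 n1 n2 where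
    h: "wt G1 a x n1" "wm G2 a A n2" "\<forall>y. G1 y + G2 y \<subseteq># G y" "n = n1 + n2" by blast
  from assms[OF h(1)] obtain n1' where a: "wt G1 b x n1'" "n1' < n1" by blast
  from add.IH[OF h(2)] obtain n2' where b: "wm G2 b A n2'" "n2' \<le> n2" by blast
  from wt_wm.wcons[OF a(1) b(1) h(3)] show ?case using a(2) b(2) h(4)
    by (intro exI[of _ "n1' + n2'"]) auto
qed

lemma sr: "dbeta a b \<Longrightarrow> wt G a s n \<Longrightarrow> \<exists>n'. wt G b s n' \<and> n' < n"
proof (induction arbitrary: G s n rule: dbeta.induct)
  case (root a b)
  then show ?case using root_sr by blast
next
  case (lam t t')
  from lam.prems obtain M s' n0 where h: "s = Arr M s'" "n = Suc n0" "wt (env_ext G M) t s' n0"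
    by (auto elim: wtLamE)
  from lam.IH[OF h(3)] obtain n' where "wt (env_ext G M) t' s' n'" "n' < n0" by blast
  then show ?case using h wt_wm.wabs by fastforce
next
  case (app1 t t' u r)
  from app1.prems obtain L A G1 n1 B G2 n2 G3 n3 where h:
    "is_ch (mset (map (\<lambda>p. Arr (fst p) (snd p)) L)) A" "wm G1 t A n1"
    "is_ch (sum_list (map fst L)) B" "wm G2 u B n2"
    "wt (env_ext G3 (mset (map snd L))) r s n3"
    "\<forall>x. G1 x + G2 x + G3 x \<subseteq># G x" "n = Suc (n1 + n2 + n3)"
    by (auto elim: wtAppE)
  from wm_sr[of t t', OF app1.IH h(2)] is_ch_ne[OF h(1)] obtain n1' where
    a: "wm G1 t' A n1'" "n1' < n1" by blast
  from wt_wm.wapp[OF h(1) a(1) h(3,4,5,6)] show ?case using a(2) h(7)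
    by (intro exI[of _ "Suc (n1' + n2 + n3)"]) auto
next
  case (app2 u u' t r)
  from app2.prems obtain L A G1 n1 B G2 n2 G3 n3 where h:
    "is_ch (mset (map (\<lambda>p. Arr (fst p) (snd p)) L)) A" "wm G1 t A n1"
    "is_ch (sum_list (map fst L)) B" "wm G2 u B n2"
    "wt (env_ext G3 (mset (map snd L))) r s n3"
    "\<forall>x. G1 x + G2 x + G3 x \<subseteq># G x" "n = Suc (n1 + n2 + n3)"
    by (auto elim: wtAppE)
  from wm_sr[of u u', OF app2.IH h(4)] is_ch_ne[OF h(3)] obtain n2' where
    a: "wm G2 u' B n2'" "n2' < n2" by blast
  from wt_wm.wapp[OF h(1,2,3) a(1) h(5,6)] show ?case using a(2) h(7)
    by (intro exI[of _ "Suc (n1 + n2' + n3)"]) auto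
next
  case (app3 r r' t u)
  from app3.prems obtain L A G1 n1 B G2 n2 G3 n3 where h:
    "is_ch (mset (map (\<lambda>p. Arr (fst p) (snd p)) L)) A" "wm G1 t A n1"
    "is_ch (sum_list (map fst L)) B" "wm G2 u B n2"
    "wt (env_ext G3 (mset (map snd L))) r s n3"
    "\<forall>x. G1 x + G2 x + G3 x \<subseteq># G x" "n = Suc (n1 + n2 + n3)"
    by (auto elim: wtAppE)
  from app3.IH[OF h(5)] obtain n3' where
    a: "wt (env_ext G3 (mset (map snd L))) r' s n3'" "n3' < n3" by blast
  from wt_wm.wapp[OF h(1,2,3,4) a(1) h(6)] show ?case using a(2) h(7)
    by (intro exI[of _ "Suc (n1 + n2 + n3')"]) auto
qed

lemma wt_SN: "wt G t s n \<Longrightarrow> SN_dbeta t"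
proof (induction n arbitrary: G t s rule: less_induct)
  case (less n)
  show ?case unfolding SN_dbeta_def
  proof
    assume "\<exists>f. f 0 = t \<and> (\<forall>i. dbeta (f i) (f (Suc i)))"
    then obtain f where f: "f 0 = t" "\<forall>i. dbeta (f i) (f (Suc i))" by blast
    from sr[OF _ less.prems] f obtain n' where "wt G (f (Suc 0)) s n'" "n' < n" by fastforce
    from less.IH[OF this(2) this(1)] have "SN_dbeta (f (Suc 0))" .
    moreover have "(\<lambda>i. f (Suc i)) 0 = f (Suc 0) \<and> (\<forall>i. dbeta ((\<lambda>i. f (Suc i)) i) ((\<lambda>i. f (Suc i)) (Suc i)))"
      using f by simp
    ultimately show False unfolding SN_dbeta_def by (meson exI[of "\<lambda>g. g 0 = f (Suc 0) \<and> (\<forall>i. dbeta (g i) (g (Suc i)))" "\<lambda>i. f (Suc i)"])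
  qed
qed

theorem mainTheorem10:
  assumes "typing G t s"
  shows "SN_dbeta t"
  using translate(1)[OF assms] wt_SN by blast

end
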